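(* Let $p>1$ be an integer and let $\mathbf{l}=(l_1,\dots,l_q)\in\mathbb{N}^q$, $\mathbf{r}=(r_1,\dots,r_s)\in\mathbb{N}^s$ have all components greater than $1$. Let $n=p\,\Pi(\mathbf{l})\,\Pi(\mathbf{r})$ and $A\in\{0,1\}^{n\times n}$. Then $A$ admits both an $(l_1,\dots,l_q,\,p\Pi(\mathbf{r}))$ factorization and a $(p\Pi(\mathbf{l}),\,r_1,\dots,r_s)$ factorization if and only if $A$ admits an $(l_1,\dots,l_q,p,r_1,\dots,r_s)$ factorization.
   Context: For $\mathbf{n}=(n_1,\dots,n_d)$, $\Pi(\mathbf{n})=\prod_{i=1}^d n_i$. Kronecker products of binary matrices use Boolean arithmetic ($1+1=1$). For positive integers $n_1,\dots,n_m$ with $\prod n_i=n$, an $(n_1,\dots,n_m)$ factorization of $A\in\{0,1\}^{n\times n}$ is an expression $A=A_1\otimes\cdots\otimes A_m$ with $A_i\in\{0,1\}^{n_i\times n_i}$. *)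

theory Defs
  imports Main
begin

text \<open>Binary matrices are represented as Boolean-valued functions on index pairs;
  an m x m binary matrix is such a function, of which only the entries with
  indices below m are relevant. True = 1, False = 0, so the Boolean Kronecker
  product (1+1=1) is given by conjunction (the sum in a Kronecker product
  entry has a single term).\<close>

type_synonym bmat = "nat \<Rightarrow> nat \<Rightarrow> bool"

definition kron :: "nat \<Rightarrow> bmat \<Rightarrow> bmat \<Rightarrow> bmat" where
  "kron b M N = (\<lambda>i j. M (i div b) (j div b) \<and> N (i mod b) (j mod b))"

fun kron_list :: "(nat \<times> bmat) list \<Rightarrow> bmat" where
  "kron_list [] = (\<lambda>i j. i = j)"
| "kron_list ((k, M) # rest) = kron (prod_list (map fst rest)) M (kron_list rest)"

definition has_factorization :: "nat list \<Rightarrow> nat \<Rightarrow> bmat \<Rightarrow> bool" where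
  "has_factorization ns n A \<longleftrightarrow> prod_list ns = n \<and>
     (\<exists>Ms :: bmat list. length Ms = length ns \<and>
        (\<forall>i<n. \<forall>j<n. A i j = kron_list (zip ns Ms) i j))"

end

theory Submission
  imports Defs
begin

lemma kron_list_assoc:
  "kron_list (xs @ ys) = kron_list (xs @ [(prod_list (map fst ys), kron_list ys)])"
proof (induction xs)
  case Nil
  show ?case by (auto simp: kron_def fun_eq_iff)
next
  case (Cons a xs)
  obtain k M where a: "a = (k, M)" by fastforce
  show ?case using Cons by (simp add: a)
qed

lemma kron_list_snoc:
  assumes "i div b < prod_list (map fst xs)" "j div b < prod_list (map fst xs)"
  shows "kron_list (xs @ [(b, B)]) i j = kron b (kron_list xs) B i j"
  using assms
proof (induction xs arbitrary: i j)
  case Nil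
  then have d: "i div b = 0" "j div b = 0" by auto
  then have "i mod b = i" "j mod b = j"
    by (metis div_mult_mod_eq add_0 mult_0)+
  then show ?case using d by (auto simp: kron_def)
next
  case (Cons a xs)
  obtain k M where a: "a = (k, M)" by fastforce
  define Q where "Q = prod_list (map fst xs)"
  have Qpos: "Q > 0" using Cons.prems by (auto simp: a Q_def intro: gr0I)
  have e1: "x div (Q * b) = x div b div Q" for x :: nat
    by (metis div_mult2_eq mult.commute)
  have e2: "x mod (Q * b) div b = x div b mod Q" for x :: nat
    apply (cases "b = 0", simp)
    by (subst mult.commute, subst mod_mult2_eq, simp)
  have e3: "x mod (Q * b) mod b = x mod b" for x :: nat
    by (metis mod_mod_cancel dvd_triv_right)
  have lt: "x mod (Q * b) div b < Q" for x :: nat using e2 Qpos by simp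
  have "kron_list ((a # xs) @ [(b, B)]) i j =
        (M (i div (Q*b)) (j div (Q*b)) \<and> kron_list (xs @ [(b, B)]) (i mod (Q*b)) (j mod (Q*b)))"
    by (simp add: a kron_def Q_def)
  also have "\<dots> = (M (i div (Q*b)) (j div (Q*b)) \<and>
      kron b (kron_list xs) B (i mod (Q*b)) (j mod (Q*b)))"
    using Cons.IH[OF lt[unfolded Q_def] lt[unfolded Q_def]] by (simp add: Q_def)
  also have "\<dots> = kron b (kron_list (a # xs)) B i j"
    by (simp add: a kron_def Q_def[symmetric] e1 e2 e3)
  finally show ?case .
qed

lemma kron_list_app:
  assumes "i div prod_list (map fst ys) < prod_list (map fst xs)"
    "j div prod_list (map fst ys) < prod_list (map fst xs)"
  shows "kron_list (xs @ ys) i j = kron (prod_list (map fst ys)) (kron_list xs) (kron_list ys) i j"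
  using kron_list_snoc[OF assms] kron_list_assoc by metis

lemma split_list_eq: "xs @ y # zs = (xs @ [y]) @ zs" by simp

theorem corollary1:
  fixes p n :: nat and l r :: "nat list" and A :: bmat
  assumes "p > 1"
    and "\<forall>x\<in>set l. x > 1"
    and "\<forall>x\<in>set r. x > 1"
    and "n = p * prod_list l * prod_list r"
  shows "(has_factorization (l @ [p * prod_list r]) n A \<and>
          has_factorization ((p * prod_list l) # r) n A)
         \<longleftrightarrow> has_factorization (l @ [p] @ r) n A"
proof -
  define Q where "Q = prod_list l"
  define Rp where "Rp = prod_list r"
  have Qpos: "Q > 0" unfolding Q_def using assms(2)
    by (metis gr_zeroI less_nat_zero_code not_one_less_zero prod_list_zero_iff)
  have Rpos: "Rp > 0" unfolding Rp_def using assms(3)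
    by (metis gr_zeroI less_nat_zero_code not_one_less_zero prod_list_zero_iff)
  have ppos: "p > 0" using assms(1) by simp
  have n: "n = Q * (p * Rp)" using assms(4) by (simp add: Q_def Rp_def)
  show ?thesis
  proof
    assume "has_factorization (l @ [p * prod_list r]) n A \<and>
          has_factorization ((p * prod_list l) # r) n A"
    then obtain Ms1 Ms2 where
      l1: "length Ms1 = length l + 1" and f1: "\<forall>i<n. \<forall>j<n. A i j = kron_list (zip (l @ [p * Rp]) Ms1) i j"
      and l2: "length Ms2 = Suc (length r)" and f2: "\<forall>i<n. \<forall>j<n. A i j = kron_list (zip ((p * Q) # r) Ms2) i j"
      unfolding has_factorization_def Q_def Rp_def by auto
    obtain Msl B where Ms1: "Ms1 = Msl @ [B]" and lMsl: "length Msl = length l"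
      using l1 by (metis add_diff_cancel_right' length_0_conv length_Suc_conv_rev Suc_eq_plus1)
    obtain C Msr where Ms2: "Ms2 = C # Msr" and lMsr: "length Msr = length r"
      using l2 by (metis length_Suc_conv)
    define Lm where "Lm = kron_list (zip l Msl)"
    define R where "R = kron_list (zip r Msr)"
    have fl: "map fst (zip l Msl) = l" using lMsl by simp
    have fr: "map fst (zip r Msr) = r" using lMsr by simp
    have F1: "A i j = kron (p*Rp) Lm B i j" if "i < n" "j < n" for i j
    proof -
      have "A i j = kron_list (zip l Msl @ [(p * Rp, B)]) i j"
        using f1 that by (simp add: Ms1 lMsl)
      also have "\<dots> = kron (p*Rp) Lm B i j"
        unfolding Lm_def
        apply (rule kron_list_snoc)
        using that by (simp_all add: fl Q_def[symmetric] n less_mult_imp_div_less)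
      finally show ?thesis .
    qed
    have F2: "A i j = kron Rp C R i j" if "i < n" "j < n" for i j
      using f2 that by (simp add: Ms2 R_def fr Rp_def)
    have key: "\<exists>P. \<forall>i<n. \<forall>j<n. A i j = kron (p*Rp) Lm (kron Rp P R) i j"
    proof (cases "\<exists>a0<Q. \<exists>a1<Q. Lm a0 a1")
      case True
      then obtain a0 a1 where a: "a0 < Q" "a1 < Q" "Lm a0 a1" by blast
      define P where "P = (\<lambda>b b'. C (a0*p + b) (a1*p + b'))"
      have "A i j = kron (p*Rp) Lm (kron Rp P R) i j" if ij: "i < n" "j < n" for i j
      proof -
        define i2 where "i2 = i mod (p*Rp)"
        define j2 where "j2 = j mod (p*Rp)"
        have i2: "i2 < p*Rp" "j2 < p*Rp" using ppos Rpos by (simp_all add: i2_def j2_def)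
        define I where "I = a0*(p*Rp) + i2"
        define J where "J = a1*(p*Rp) + j2"
        have bnd: "x*(p*Rp) + y < n" if "x < Q" "y < p*Rp" for x y
        proof -
          have "(x+1)*(p*Rp) \<le> Q*(p*Rp)" using that(1) by (intro mult_right_mono) auto
          then show ?thesis using that(2) n by simp
        qed
        have "I < n" unfolding I_def using bnd a(1) i2 by blast
        have "J < n" unfolding J_def using bnd a(2) i2 by blast
        have "A I J = B i2 j2" using F1[OF \<open>I < n\<close> \<open>J < n\<close>] a(3) i2 ppos Rpos
          by (simp add: kron_def I_def J_def)
        moreover have "A I J = kron Rp P R i2 j2"
          using F2[OF \<open>I < n\<close> \<open>J < n\<close>] Rpos
          by (simp add: kron_def I_def J_def P_def div_add1_eq mult.assoc[symmetric] mod_add_left_eq) 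
        ultimately show ?thesis using F1[OF ij] by (simp add: kron_def i2_def j2_def)
      qed
      then show ?thesis by blast
    next
      case False
      have "A i j = kron (p*Rp) Lm (kron Rp (\<lambda>_ _. False) R) i j" if ij: "i < n" "j < n" for i j
      proof -
        have "i div (p*Rp) < Q" "j div (p*Rp) < Q" using ij n by (simp_all add: less_mult_imp_div_less)
        then show ?thesis using F1[OF ij] False by (auto simp: kron_def)
      qed
      then show ?thesis by blast
    qed
    then obtain P where P: "\<forall>i<n. \<forall>j<n. A i j = kron (p*Rp) Lm (kron Rp P R) i j" by blast
    show "has_factorization (l @ [p] @ r) n A"
      unfolding has_factorization_def
    proof (intro conjI exI[of _ "Msl @ [P] @ Msr"] allI impI)
      show "prod_list (l @ [p] @ r) = n" using n by (simp add: Q_def Rp_def)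
      show "length (Msl @ [P] @ Msr) = length (l @ [p] @ r)" using lMsl lMsr by simp
      fix i j assume ij: "i < n" "j < n"
      have z: "zip (l @ [p] @ r) (Msl @ [P] @ Msr) = zip l Msl @ ((p, P) # zip r Msr)"
        using lMsl lMsr by simp
      have "kron_list (zip l Msl @ ((p, P) # zip r Msr)) i j = kron (p*Rp) Lm (kron Rp P R) i j"
        apply (subst kron_list_app)
        using ij by (simp_all add: fl fr Q_def[symmetric] Rp_def[symmetric] n less_mult_imp_div_less Lm_def R_def mult.commute)
      then show "A i j = kron_list (zip (l @ [p] @ r) (Msl @ [P] @ Msr)) i j"
        using P ij z by simp
    qed
  next
    assume "has_factorization (l @ [p] @ r) n A"
    then obtain Ms where lMs: "length Ms = length l + 1 + length r"
      and f: "\<forall>i<n. \<forall>j<n. A i j = kron_list (zip (l @ [p] @ r) Ms) i j"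
      unfolding has_factorization_def by auto
    obtain Msl P Msr where Ms: "Ms = Msl @ [P] @ Msr" and lMsl: "length Msl = length l"
      and lMsr: "length Msr = length r"
    proof -
      have "Ms = take (length l) Ms @ [Ms ! length l] @ drop (Suc (length l)) Ms"
        using lMs by (simp add: Cons_nth_drop_Suc)
      then show ?thesis using that lMs by fastforce
    qed
    have fl: "map fst (zip l Msl) = l" using lMsl by simp
    have fr: "map fst (zip r Msr) = r" using lMsr by simp
    have z: "zip (l @ [p] @ r) Ms = zip l Msl @ ((p, P) # zip r Msr)"
      using lMsl lMsr Ms by simp
    have h1: "has_factorization (l @ [p * prod_list r]) n A"
      unfolding has_factorization_def
    proof (intro conjI exI[of _ "Msl @ [kron_list ((p, P) # zip r Msr)]"] allI impI)
      show "prod_list (l @ [p * prod_list r]) = n" using n by (simp add: Q_def Rp_def)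
      show "length (Msl @ [kron_list ((p, P) # zip r Msr)]) = length (l @ [p * prod_list r])"
        using lMsl by simp
      fix i j assume ij: "i < n" "j < n"
      have "zip (l @ [p * prod_list r]) (Msl @ [kron_list ((p, P) # zip r Msr)])
          = zip l Msl @ [(prod_list (map fst ((p, P) # zip r Msr)), kron_list ((p, P) # zip r Msr))]"
        using lMsl fr by simp
      then show "A i j = kron_list (zip (l @ [p * prod_list r]) (Msl @ [kron_list ((p, P) # zip r Msr)])) i j"
        using f ij z by (simp only: kron_list_assoc[symmetric])
    qed
    have h2: "has_factorization ((p * prod_list l) # r) n A"
      unfolding has_factorization_def
    proof (intro conjI exI[of _ "kron_list (zip l Msl @ [(p, P)]) # Msr"] allI impI)
      show "prod_list ((p * prod_list l) # r) = n" using n by (simp add: Q_def Rp_def)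
      show "length (kron_list (zip l Msl @ [(p, P)]) # Msr) = length ((p * prod_list l) # r)"
        using lMsr by simp
      fix i j assume ij: "i < n" "j < n"
      have "kron_list (zip (l @ [p] @ r) Ms) i j
          = kron Rp (kron_list (zip l Msl @ [(p, P)])) (kron_list (zip r Msr)) i j"
        unfolding z
        apply (subst (1) split_list_eq)
        apply (subst kron_list_app)
        using ij by (simp_all add: fl fr Q_def[symmetric] Rp_def[symmetric] n less_mult_imp_div_less mult.commute mult.left_commute)
      then show "A i j = kron_list (zip ((p * prod_list l) # r) (kron_list (zip l Msl @ [(p, P)]) # Msr)) i j"
        using f ij by (simp add: fr Rp_def)
    qed
    show "has_factorization (l @ [p * prod_list r]) n A \<and> has_factorization ((p * prod_list l) # r) n A"
      using h1 h2 by blast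
  qed
qed

end
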